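(* Let $\kappa>0$, $\nu\in\mathbb R$, and on $\mathbb H$ (the logarithmic chart) let $\delta(z)=4\cot\frac z2-2\nu$ and $\sigma(z)=-2\sqrt\kappa$ (the radial SLE with drift; in the half-plane chart, via $z\mapsto\tan\frac z2$, these are $\delta=2(\frac1z+z)-\nu(1+z^2)$, $\sigma=-\sqrt\kappa(1+z^2)$). Let $$\Gamma_{tw}(z,w)=-\frac12\log\frac{\tan\frac{z-w}4\,\tan\frac{\bar z-\bar w}4}{\tan\frac{\bar z-w}4\,\tan\frac{z-\bar w}4},\qquad z,w\in\mathbb H.$$ Suppose there exist $\mu,\mu^*\in\mathbb C$ and a real-valued $C^2$ function $\eta$ on $\mathbb H$ (the logarithmic-chart representative of a real pre-pre-Schwarzian of order $(\mu,\mu^* )$) such that, for all $z\ne w$ in $\mathbb H$, $$\mathcal{L}_\delta\eta+\tfrac12\mathcal{L}_\sigma^2\eta=0,\qquad \mathcal{L}_\delta\Gamma_{tw}(z,w)+\mathcal{L}_\sigma\eta(z)\,\mathcal{L}_\sigma\eta(w)=0,\qquad \mathcal{L}_\sigma\Gamma_{tw}(z,w)=0.$$ Then $\kappa=4$ and $\nu=0$.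
   Context: The logarithmic chart is related to the unit-disk chart by $z\mapsto e^{iz}$ and to the half-plane chart by $z\mapsto\tan\frac z2$; it is multivalued, and $\Gamma_{tw}$ is $4\pi$-periodic and $2\pi$-antiperiodic in each variable (a Green's function on the double cover of the disk punctured at the radial fixed point). Lie derivatives: $\mathcal{L}_v\eta=v\partial_z\eta+\bar v\partial_{\bar z}\eta+\mu v'+\mu^*\overline{v'}$; for a scalar $\rho$, $\mathcal L_v\rho=v\partial_z\rho+\bar v\partial_{\bar z}\rho$; $\mathcal L^2_\sigma\eta=\mathcal L_\sigma(\mathcal L_\sigma\eta)$ with $\mathcal L_\sigma\eta$ treated as a scalar; $\mathcal{L}_v\Gamma(z,w)=v(z)\partial_z\Gamma+\overline{v(z)}\partial_{\bar z}\Gamma+v(w)\partial_w\Gamma+\overline{v(w)}\partial_{\bar w}\Gamma$. *)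

theory Defs
  imports "HOL-Analysis.Analysis"
begin

definition upper_half :: "complex set" where
  "upper_half = {z. Im z > 0}"

definition px :: "(complex \<Rightarrow> complex) \<Rightarrow> complex \<Rightarrow> complex" where
  "px f z = vector_derivative (\<lambda>t::real. f (z + of_real t)) (at 0)"

definition py :: "(complex \<Rightarrow> complex) \<Rightarrow> complex \<Rightarrow> complex" where
  "py f z = vector_derivative (\<lambda>t::real. f (z + \<i> * of_real t)) (at 0)"

definition wz :: "(complex \<Rightarrow> complex) \<Rightarrow> complex \<Rightarrow> complex" where
  "wz f z = (px f z - \<i> * py f z) / 2"

definition wzb :: "(complex \<Rightarrow> complex) \<Rightarrow> complex \<Rightarrow> complex" where
  "wzb f z = (px f z + \<i> * py f z) / 2"

definition lie_scalar :: "(complex \<Rightarrow> complex) \<Rightarrow> (complex \<Rightarrow> complex) \<Rightarrow> complex \<Rightarrow> complex" where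
  "lie_scalar v \<rho> z = v z * wz \<rho> z + cnj (v z) * wzb \<rho> z"

definition lie_pps :: "complex \<Rightarrow> complex \<Rightarrow> (complex \<Rightarrow> complex) \<Rightarrow> (complex \<Rightarrow> complex) \<Rightarrow> complex \<Rightarrow> complex" where
  "lie_pps \<mu> \<mu>s v \<eta> z = lie_scalar v \<eta> z + \<mu> * deriv v z + \<mu>s * cnj (deriv v z)"

definition lie_two :: "(complex \<Rightarrow> complex) \<Rightarrow> (complex \<Rightarrow> complex \<Rightarrow> complex) \<Rightarrow> complex \<Rightarrow> complex \<Rightarrow> complex" where
  "lie_two v G z w =
     v z * wz (\<lambda>z'. G z' w) z + cnj (v z) * wzb (\<lambda>z'. G z' w) z
   + v w * wz (\<lambda>w'. G z w') w + cnj (v w) * wzb (\<lambda>w'. G z w') w"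

definition Gamma_tw :: "complex \<Rightarrow> complex \<Rightarrow> complex" where
  "Gamma_tw z w = - (1/2) * Ln ((tan ((z - w) / 4) * tan ((cnj z - cnj w) / 4))
                              / (tan ((cnj z - w) / 4) * tan ((z - cnj w) / 4)))"

definition C2_on :: "complex set \<Rightarrow> (complex \<Rightarrow> real) \<Rightarrow> bool" where
  "C2_on S f \<longleftrightarrow> (\<exists>(f' :: complex \<Rightarrow> (complex \<Rightarrow>\<^sub>L real)) f''.
       (\<forall>z\<in>S. (f has_derivative blinfun_apply (f' z)) (at z)) \<and>
       (\<forall>z\<in>S. (f' has_derivative blinfun_apply (f'' z)) (at z)) \<and>
       continuous_on S f'')"

end

theory Submission
  imports Defs
begin


lemma tanfac:
  fixes b v :: complex
  assumes "cos b \<noteq> 0"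
  shows "((\<lambda>\<zeta>. tan (b + \<zeta> * v)) has_field_derivative (v / (cos b)^2)) (at 0)"
proof -
  have "((\<lambda>\<zeta>. b + \<zeta> * v) has_field_derivative v) (at 0)"
    by (auto intro!: derivative_eq_intros)
  from DERIV_chain2[OF DERIV_tan this] assms show ?thesis
    by (simp add: field_simps)
qed

lemma alg_T:
  fixes T1 T2 T3 T4 a1 a2 a3 a4 :: complex
  assumes "T1 \<noteq> 0" "T2 \<noteq> 0" "T3 \<noteq> 0" "T4 \<noteq> 0"
  shows "inverse (T1*T2/(T3*T4)) * (((a1 * T2 + T1 * a2) * (T3*T4) - (T1*T2) * (a3 * T4 + T3 * a4)) / (T3*T4)^2)
     = a1/T1 + a2/T2 - a3/T3 - a4/T4"
  using assms by (simp add: field_simps power2_eq_square)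

lemma alg_sc:
  fixes s c v :: complex
  assumes "s \<noteq> 0" "c \<noteq> 0"
  shows "v / c^2 / (s / c) = v / (s * c)"
  using assms by (simp add: field_simps power2_eq_square)

lemma vd_gam:
  fixes b1 b2 b3 b4 v1 v2 v3 v4 :: complex
  assumes c: "cos b1 \<noteq> 0" "cos b2 \<noteq> 0" "cos b3 \<noteq> 0" "cos b4 \<noteq> 0"
      and s: "sin b1 \<noteq> 0" "sin b2 \<noteq> 0" "sin b3 \<noteq> 0" "sin b4 \<noteq> 0"
      and R: "tan b1 * tan b2 / (tan b3 * tan b4) \<notin> \<real>\<^sub>\<le>\<^sub>0"
  shows "((\<lambda>t::real. -(1/2) * Ln (tan (b1 + of_real t * v1) * tan (b2 + of_real t * v2)
             / (tan (b3 + of_real t * v3) * tan (b4 + of_real t * v4))))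
         has_vector_derivative
          (-(1/2) * (v1 / (sin b1 * cos b1) + v2 / (sin b2 * cos b2)
                    - v3 / (sin b3 * cos b3) - v4 / (sin b4 * cos b4)))) (at 0)"
proof -
  define T1 where "T1 = tan b1"
  define T2 where "T2 = tan b2"
  define T3 where "T3 = tan b3"
  define T4 where "T4 = tan b4"
  have t: "T1 \<noteq> 0" "T2 \<noteq> 0" "T3 \<noteq> 0" "T4 \<noteq> 0" using c s by (auto simp: T1_def T2_def T3_def T4_def tan_def)
  let ?N = "\<lambda>\<zeta>::complex. tan (b1 + \<zeta> * v1) * tan (b2 + \<zeta> * v2)"
  let ?D = "\<lambda>\<zeta>::complex. tan (b3 + \<zeta> * v3) * tan (b4 + \<zeta> * v4)"
  have N: "(?N has_field_derivative (v1/(cos b1)^2 * T2 + T1 * (v2/(cos b2)^2))) (at 0)"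
    using DERIV_mult[OF tanfac[of b1 v1, OF c(1)] tanfac[of b2 v2, OF c(2)]] by (simp add: T1_def T2_def ac_simps)
  have D: "(?D has_field_derivative (v3/(cos b3)^2 * T4 + T3 * (v4/(cos b4)^2))) (at 0)"
    using DERIV_mult[OF tanfac[of b3 v3, OF c(3)] tanfac[of b4 v4, OF c(4)]] by (simp add: T3_def T4_def ac_simps)
  have Q: "((\<lambda>\<zeta>. ?N \<zeta> / ?D \<zeta>) has_field_derivative
     (((v1/(cos b1)^2 * T2 + T1 * (v2/(cos b2)^2)) * (T3*T4) - (T1*T2) * (v3/(cos b3)^2 * T4 + T3 * (v4/(cos b4)^2))) / (T3*T4)^2)) (at 0)"
    using DERIV_divide[OF N D] t by (simp add: T1_def T2_def T3_def T4_def power2_eq_square)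
  have L: "(Ln has_field_derivative inverse (T1*T2/(T3*T4))) (at (?N 0 / ?D 0))"
    using has_field_derivative_Ln[OF R] by (simp add: T1_def T2_def T3_def T4_def)
  have F: "((\<lambda>\<zeta>. -(1/2) * Ln (?N \<zeta> / ?D \<zeta>)) has_field_derivative
     (-(1/2) * (inverse (T1*T2/(T3*T4)) * (((v1/(cos b1)^2 * T2 + T1 * (v2/(cos b2)^2)) * (T3*T4) - (T1*T2) * (v3/(cos b3)^2 * T4 + T3 * (v4/(cos b4)^2))) / (T3*T4)^2)))) (at 0)"
    by (rule DERIV_cmult[OF DERIV_chain2[OF L Q]])
  have EQ: "-(1/2) * (inverse (T1*T2/(T3*T4)) * (((v1/(cos b1)^2 * T2 + T1 * (v2/(cos b2)^2)) * (T3*T4) - (T1*T2) * (v3/(cos b3)^2 * T4 + T3 * (v4/(cos b4)^2))) / (T3*T4)^2))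
     = (-(1/2) * (v1 / (sin b1 * cos b1) + v2 / (sin b2 * cos b2)
                    - v3 / (sin b3 * cos b3) - v4 / (sin b4 * cos b4)))"
    apply (subst alg_T[OF t, of "v1/(cos b1)^2" "v2/(cos b2)^2" "v3/(cos b3)^2" "v4/(cos b4)^2"])
    apply (simp only: T1_def T2_def T3_def T4_def tan_def alg_sc[OF s(1) c(1)] alg_sc[OF s(2) c(2)]
       alg_sc[OF s(3) c(3)] alg_sc[OF s(4) c(4)])
    done
  have "((\<lambda>\<zeta>. -(1/2) * Ln (?N \<zeta> / ?D \<zeta>)) has_field_derivative
     (-(1/2) * (v1 / (sin b1 * cos b1) + v2 / (sin b2 * cos b2)
                    - v3 / (sin b3 * cos b3) - v4 / (sin b4 * cos b4)))) (at (of_real 0))"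
    using F by (simp only: of_real_0 EQ)
  from has_vector_derivative_real_field[OF this]
  show ?thesis by simp
qed
lemma sin_ne0_H:
  fixes b :: complex assumes "Im b \<noteq> 0" shows "sin b \<noteq> 0" "cos b \<noteq> 0"
  using assms by (auto simp: sin_eq_0 cos_eq_0)

lemma b1_conds:
  fixes z w :: complex
  assumes "\<forall>k::int. z - w \<noteq> of_real (2 * pi * of_int k)"
  shows "sin ((z - w)/4) \<noteq> 0" "cos ((z - w)/4) \<noteq> 0"
proof -
  show "sin ((z - w)/4) \<noteq> 0"
  proof
    assume "sin ((z - w)/4) = 0"
    then obtain n::int where "(z-w)/4 = of_real (n*pi)" by (auto simp: sin_eq_0)
    then have "z - w = of_real (2 * pi * of_int (2*n))" by (simp add: field_simps)
    with assms show False by blast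
  qed
  show "cos ((z - w)/4) \<noteq> 0"
  proof
    assume "cos ((z - w)/4) = 0"
    then obtain n::int where "(z-w)/4 = of_real (n*pi) + of_real pi / 2" by (auto simp: cos_eq_0)
    then have "z - w = 4 * (of_real (n*pi) + of_real pi / 2)" by (simp add: field_simps)
    then have "z - w = of_real (2 * pi * of_int (2*n+1))" by (simp add: algebra_simps)
    with assms show False by blast
  qed
qed

lemma Gam_conds:
  fixes z w :: complex
  assumes z: "Im z > 0" and w: "Im w > 0"
      and k: "\<forall>k::int. z - w \<noteq> of_real (2 * pi * of_int k)"
  defines "b1 \<equiv> (z - w)/4" and "b2 \<equiv> (cnj z - cnj w)/4" and "b3 \<equiv> (cnj z - w)/4" and "b4 \<equiv> (z - cnj w)/4"
  shows "cos b1 \<noteq> 0" "cos b2 \<noteq> 0" "cos b3 \<noteq> 0" "cos b4 \<noteq> 0"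
        "sin b1 \<noteq> 0" "sin b2 \<noteq> 0" "sin b3 \<noteq> 0" "sin b4 \<noteq> 0"
        "tan b1 * tan b2 / (tan b3 * tan b4) \<notin> \<real>\<^sub>\<le>\<^sub>0"
proof -
  have e2: "b2 = cnj b1" and e3: "b3 = cnj b4" by (simp_all add: b1_def b2_def b3_def b4_def)
  have i4: "Im b4 \<noteq> 0" "Im b3 \<noteq> 0" using z w by (simp_all add: b3_def b4_def)
  show c1: "cos b1 \<noteq> 0" and s1: "sin b1 \<noteq> 0" using b1_conds[OF k] by (simp_all add: b1_def)
  show "cos b2 \<noteq> 0" "sin b2 \<noteq> 0" using c1 s1 unfolding e2 cnj_sin[symmetric] cnj_cos[symmetric] by simp_all
  show c4: "cos b3 \<noteq> 0" "cos b4 \<noteq> 0" "sin b3 \<noteq> 0" "sin b4 \<noteq> 0" using sin_ne0_H i4 by auto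
  have t1: "tan b1 \<noteq> 0" and t4: "tan b4 \<noteq> 0" using c1 s1 c4 by (auto simp: tan_def)
  have "tan b1 * tan b2 / (tan b3 * tan b4) = of_real ((norm (tan b1))^2 / (norm (tan b4))^2)"
    unfolding e2 e3 cnj_tan[symmetric] of_real_divide complex_norm_square by (simp add: mult.commute)
  moreover have "(norm (tan b1))^2 / (norm (tan b4))^2 > 0" using t1 t4 by simp
  ultimately show "tan b1 * tan b2 / (tan b3 * tan b4) \<notin> \<real>\<^sub>\<le>\<^sub>0"
    by (simp add: complex_nonpos_Reals_iff)
qed

lemma sc_inv:
  fixes u v :: complex
  shows "v / (sin (u/4) * cos (u/4)) = 2 * v * inverse (sin (u/2))"
proof -
  have "sin (2 * (u/4)) = 2 * sin (u/4) * cos (u/4)" by (rule sin_double)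
  then have e: "sin (u/4) * cos (u/4) = sin (u/2) / 2" by simp
  have "v / (sin (u/4) * cos (u/4)) = v / (sin (u/2) / 2)" by (simp only: e)
  also have "\<dots> = 2 * v * inverse (sin (u/2))" by (cases "sin (u/2) = 0") (simp_all add: field_simps)
  finally show ?thesis .
qed

lemma Gam_shape:
  assumes "(z' - w')/4 = b1 + c * v1" "(cnj z' - cnj w')/4 = b2 + c * v2"
          "(cnj z' - w')/4 = b3 + c * v3" "(z' - cnj w')/4 = b4 + c * v4"
  shows "Gamma_tw z' w' = -(1/2)*Ln(tan(b1 + c * v1)*tan(b2+c * v2)/(tan(b3+c * v3)*tan(b4+c * v4)))"
  unfolding Gamma_tw_def by (simp only: assms)



lemma Gam_derivs:
  fixes z w :: complex
  assumes z: "Im z > 0" and w: "Im w > 0"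
      and k: "\<forall>k::int. z - w \<noteq> of_real (2 * pi * of_int k)"
  defines "a1 \<equiv> inverse (sin ((z - w)/2))" and "a2 \<equiv> inverse (sin ((cnj z - cnj w)/2))"
      and "a3 \<equiv> inverse (sin ((cnj z - w)/2))" and "a4 \<equiv> inverse (sin ((z - cnj w)/2))"
  shows "px (\<lambda>z'. Gamma_tw z' w) z = -(a1 + a2 - a3 - a4)/4"
        "py (\<lambda>z'. Gamma_tw z' w) z = -\<i>*(a1 - a2 + a3 - a4)/4"
        "px (\<lambda>w'. Gamma_tw z w') w = (a1 + a2 - a3 - a4)/4"
        "py (\<lambda>w'. Gamma_tw z w') w = -\<i>*(- a1 + a2 + a3 - a4)/4"
proof -
  define b1 where "b1 = (z - w)/4"
  define b2 where "b2 = (cnj z - cnj w)/4"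
  define b3 where "b3 = (cnj z - w)/4"
  define b4 where "b4 = (z - cnj w)/4"
  note C = Gam_conds[OF z w k, folded b1_def b2_def b3_def b4_def]
  note V = vd_gam[OF C]
  have ia: "v / (sin b1 * cos b1) = 2 * v * a1" "v / (sin b2 * cos b2) = 2 * v * a2"
           "v / (sin b3 * cos b3) = 2 * v * a3" "v / (sin b4 * cos b4) = 2 * v * a4" for v
    unfolding a1_def a2_def a3_def a4_def b1_def b2_def b3_def b4_def by (simp_all only: sc_inv)
  have "(\<lambda>t. Gamma_tw (z + of_real t) w) = (\<lambda>t::real. -(1/2) * Ln (tan (b1 + of_real t * (1/4)) * tan (b2 + of_real t * (1/4))
             / (tan (b3 + of_real t * (1/4)) * tan (b4 + of_real t * (1/4)))))"
    by (rule ext, rule Gam_shape) (simp_all add: b1_def b2_def b3_def b4_def field_simps)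
  then have P: "px (\<lambda>z'. Gamma_tw z' w) z = (-(1/2) * ((1/4) / (sin b1 * cos b1) + (1/4) / (sin b2 * cos b2)
                    - (1/4) / (sin b3 * cos b3) - (1/4) / (sin b4 * cos b4)))"
    unfolding px_def by (simp only: vector_derivative_at[OF V[of "1/4" "1/4" "1/4" "1/4"]])
  show "px (\<lambda>z'. Gamma_tw z' w) z = -(a1 + a2 - a3 - a4)/4" by (simp only: P ia) (simp add: algebra_simps)
  have "(\<lambda>t. Gamma_tw (z + \<i> * of_real t) w) = (\<lambda>t::real. -(1/2) * Ln (tan (b1 + of_real t * (\<i>/4)) * tan (b2 + of_real t * (-\<i>/4))
             / (tan (b3 + of_real t * (-\<i>/4)) * tan (b4 + of_real t * (\<i>/4)))))"
    by (rule ext, rule Gam_shape) (simp_all add: b1_def b2_def b3_def b4_def field_simps)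
  then have P: "py (\<lambda>z'. Gamma_tw z' w) z = (-(1/2) * ((\<i>/4) / (sin b1 * cos b1) + (-\<i>/4) / (sin b2 * cos b2)
                    - (-\<i>/4) / (sin b3 * cos b3) - (\<i>/4) / (sin b4 * cos b4)))"
    unfolding py_def by (simp only: vector_derivative_at[OF V[of "\<i>/4" "-\<i>/4" "-\<i>/4" "\<i>/4"]])
  show "py (\<lambda>z'. Gamma_tw z' w) z = -\<i>*(a1 - a2 + a3 - a4)/4" by (simp only: P ia) (simp add: algebra_simps)
  have "(\<lambda>t. Gamma_tw z (w + of_real t)) = (\<lambda>t::real. -(1/2) * Ln (tan (b1 + of_real t * (-1/4)) * tan (b2 + of_real t * (-1/4))
             / (tan (b3 + of_real t * (-1/4)) * tan (b4 + of_real t * (-1/4)))))"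
    by (rule ext, rule Gam_shape) (simp_all add: b1_def b2_def b3_def b4_def field_simps)
  then have P: "px (\<lambda>w'. Gamma_tw z w') w = (-(1/2) * ((-1/4) / (sin b1 * cos b1) + (-1/4) / (sin b2 * cos b2)
                    - (-1/4) / (sin b3 * cos b3) - (-1/4) / (sin b4 * cos b4)))"
    unfolding px_def by (simp only: vector_derivative_at[OF V[of "-1/4" "-1/4" "-1/4" "-1/4"]])
  show "px (\<lambda>w'. Gamma_tw z w') w = (a1 + a2 - a3 - a4)/4" by (simp only: P ia) (simp add: algebra_simps)
  have "(\<lambda>t. Gamma_tw z (w + \<i> * of_real t)) = (\<lambda>t::real. -(1/2) * Ln (tan (b1 + of_real t * (-\<i>/4)) * tan (b2 + of_real t * (\<i>/4))
             / (tan (b3 + of_real t * (-\<i>/4)) * tan (b4 + of_real t * (\<i>/4)))))"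
    by (rule ext, rule Gam_shape) (simp_all add: b1_def b2_def b3_def b4_def field_simps)
  then have P: "py (\<lambda>w'. Gamma_tw z w') w = (-(1/2) * ((-\<i>/4) / (sin b1 * cos b1) + (\<i>/4) / (sin b2 * cos b2)
                    - (-\<i>/4) / (sin b3 * cos b3) - (\<i>/4) / (sin b4 * cos b4)))"
    unfolding py_def by (simp only: vector_derivative_at[OF V[of "-\<i>/4" "\<i>/4" "-\<i>/4" "\<i>/4"]])
  show "py (\<lambda>w'. Gamma_tw z w') w = -\<i>*(- a1 + a2 + a3 - a4)/4" by (simp only: P ia) (simp add: algebra_simps)
qed

lemma alg1:
  fixes a1 a2 a3 a4 dz cdz dw cdw :: complex
  shows "dz * (((-(a1 + a2 - a3 - a4)/4) - \<i> * (-\<i>*(a1 - a2 + a3 - a4)/4)) / 2)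
   + cdz * (((-(a1 + a2 - a3 - a4)/4) + \<i> * (-\<i>*(a1 - a2 + a3 - a4)/4)) / 2)
   + dw * ((((a1 + a2 - a3 - a4)/4) - \<i> * (-\<i>*(- a1 + a2 + a3 - a4)/4)) / 2)
   + cdw * ((((a1 + a2 - a3 - a4)/4) + \<i> * (-\<i>*(- a1 + a2 + a3 - a4)/4)) / 2)
   = -(1/4)*((dz-dw)*a1 + (cdz-cdw)*a2 + (dw-cdz)*a3 + (cdw-dz)*a4)"
  by (simp add: algebra_simps) (simp add: field_simps)

lemma alg2:
  fixes S1 C1 S2 C2 n :: complex
  assumes "S1 \<noteq> 0" "S2 \<noteq> 0" "S1*C2 - C1*S2 \<noteq> 0"
  shows "((4*C1/S1 - 2*n) - (4*C2/S2 - 2*n)) * inverse (S1*C2 - C1*S2) = -4/(S1*S2)"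
  using assms by (simp add: field_simps)

lemma alg2':
  fixes S1 C1 S2 C2 n :: complex
  assumes "S1 \<noteq> 0" "S2 \<noteq> 0" "S2*C1 - C2*S1 \<noteq> 0"
  shows "((4*C1/S1 - 2*n) - (4*C2/S2 - 2*n)) * inverse (S2*C1 - C2*S1) = 4/(S1*S2)"
  using assms by (simp add: field_simps)

lemma alg3:
  fixes S1 S2 S3 S4 :: complex
  assumes "S1 \<noteq> 0" "S2 \<noteq> 0" "S3 \<noteq> 0" "S4 \<noteq> 0"
  shows "-(1/4)*(-4/(S1*S2) + -4/(S3*S4) + 4/(S2*S3) + 4/(S4*S1)) = (inverse S1 - inverse S3) * (inverse S2 - inverse S4)"
  using assms by (simp add: field_simps)

lemma sin_half_ne0:
  fixes z w :: complex
  assumes "\<forall>k::int. z - w \<noteq> of_real (2 * pi * of_int k)"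
  shows "sin ((z - w)/2) \<noteq> 0"
proof
  assume "sin ((z - w)/2) = 0"
  then obtain n::int where "(z-w)/2 = of_real (n*pi)" by (auto simp: sin_eq_0)
  then have "z - w = of_real (2 * pi * of_int n)" by (simp add: field_simps)
  with assms show False by blast
qed

lemma lie_two_Gam:
  fixes z w :: complex and \<nu> :: real
  assumes z: "Im z > 0" and w: "Im w > 0"
      and k: "\<forall>k::int. z - w \<noteq> of_real (2 * pi * of_int k)"
  shows "lie_two (\<lambda>z. 4 * cot (z / 2) - 2 * of_real \<nu>) Gamma_tw z w
       = (inverse (sin (z/2)) - inverse (sin (cnj z/2))) * (inverse (sin (w/2)) - inverse (sin (cnj w/2)))"
proof -
  define S1 where "S1 = sin (z/2)"
  define C1 where "C1 = cos (z/2)"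
  define S2 where "S2 = sin (w/2)"
  define C2 where "C2 = cos (w/2)"
  define S3 where "S3 = sin (cnj z/2)"
  define C3 where "C3 = cos (cnj z/2)"
  define S4 where "S4 = sin (cnj w/2)"
  define C4 where "C4 = cos (cnj w/2)"
  have S: "S1 \<noteq> 0" "S2 \<noteq> 0" "S3 \<noteq> 0" "S4 \<noteq> 0"
    using z w sin_ne0_H unfolding S1_def S2_def S3_def S4_def by auto
  have d1: "sin ((z - w)/2) = S1*C2 - C1*S2"
    unfolding S1_def C1_def S2_def C2_def by (simp add: sin_diff[symmetric] diff_divide_distrib)
  have d2: "sin ((cnj z - cnj w)/2) = S3*C4 - C3*S4"
    unfolding S3_def C3_def S4_def C4_def by (simp add: sin_diff[symmetric] diff_divide_distrib)
  have d3: "sin ((cnj z - w)/2) = S3*C2 - C3*S2"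
    unfolding S3_def C3_def S2_def C2_def by (simp add: sin_diff[symmetric] diff_divide_distrib)
  have d4: "sin ((z - cnj w)/2) = S1*C4 - C1*S4"
    unfolding S1_def C1_def S4_def C4_def by (simp add: sin_diff[symmetric] diff_divide_distrib)
  have D1: "S1*C2 - C1*S2 \<noteq> 0" using sin_half_ne0[OF k] d1 by simp
  have D2: "S3*C4 - C3*S4 \<noteq> 0"
  proof -
    have "sin ((cnj z - cnj w)/2) = cnj (sin ((z - w)/2))" by (simp add: cnj_sin)
    then show ?thesis using sin_half_ne0[OF k] d2 by simp
  qed
  have D3: "S3*C2 - C3*S2 \<noteq> 0" using d3 sin_ne0_H[of "(cnj z - w)/2"] z w by simp
  have D4: "S1*C4 - C1*S4 \<noteq> 0" using d4 sin_ne0_H[of "(z - cnj w)/2"] z w by simp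
  have cz: "cnj (4*C1/S1 - 2* of_real \<nu>) = 4*C3/S3 - 2* of_real \<nu>"
    unfolding C3_def S3_def C1_def S1_def by (simp add: cnj_sin cnj_cos)
  have cw: "cnj (4*C2/S2 - 2* of_real \<nu>) = 4*C4/S4 - 2* of_real \<nu>"
    unfolding C4_def S4_def C2_def S2_def by (simp add: cnj_sin cnj_cos)
  have dz: "4 * cot (z / 2) - 2 * complex_of_real \<nu> = 4*C1/S1 - 2* of_real \<nu>"
    unfolding C1_def S1_def cot_def by simp
  have dw: "4 * cot (w / 2) - 2 * complex_of_real \<nu> = 4*C2/S2 - 2* of_real \<nu>"
    unfolding C2_def S2_def cot_def by simp
  note G = Gam_derivs[OF z w k, unfolded d1 d2 d3 d4]
  have "lie_two (\<lambda>z. 4 * cot (z / 2) - 2 * of_real \<nu>) Gamma_tw z w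
     = -(1/4)*(((4*C1/S1 - 2* of_real \<nu>) - (4*C2/S2 - 2* of_real \<nu>)) * inverse (S1*C2 - C1*S2)
             + ((4*C3/S3 - 2* of_real \<nu>) - (4*C4/S4 - 2* of_real \<nu>)) * inverse (S3*C4 - C3*S4)
             + ((4*C2/S2 - 2* of_real \<nu>) - (4*C3/S3 - 2* of_real \<nu>)) * inverse (S3*C2 - C3*S2)
             + ((4*C4/S4 - 2* of_real \<nu>) - (4*C1/S1 - 2* of_real \<nu>)) * inverse (S1*C4 - C1*S4))"
    unfolding lie_two_def wz_def wzb_def G dz dw cz cw by (rule alg1)
  also have "\<dots> = -(1/4)*(-4/(S1*S2) + -4/(S3*S4) + 4/(S2*S3) + 4/(S4*S1))"
    by (simp only: alg2[OF S(1) S(2) D1] alg2[OF S(3) S(4) D2] alg2'[OF S(2) S(3) D3] alg2'[OF S(4) S(1) D4])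
  also have "\<dots> = (inverse S1 - inverse S3) * (inverse S2 - inverse S4)"
    by (rule alg3[OF S])
  finally show ?thesis unfolding S1_def S2_def S3_def S4_def .
qed



lemma pxpy_real:
  fixes \<eta> :: "complex \<Rightarrow> real"
  assumes d: "(\<eta> has_derivative D) (at z)"
  shows "px (\<lambda>z. complex_of_real (\<eta> z)) z = of_real (D 1)"
        "py (\<lambda>z. complex_of_real (\<eta> z)) z = of_real (D \<i>)"
proof -
  have lin: "linear D" using d by (rule has_derivative_linear)
  have sc: "D (of_real t * v) = t * D v" for t v
    using linear_cmul[OF lin, of t v] by (simp add: scaleR_conv_of_real)
  {
    fix v :: complex
    have "((\<lambda>t::real. z + of_real t * v) has_derivative (\<lambda>t. of_real t * v)) (at 0)"
      by (auto intro!: derivative_eq_intros)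
    from diff_chain_at[OF this] d
    have "((\<lambda>t. \<eta> (z + of_real t * v)) has_derivative (\<lambda>t. D (of_real t * v))) (at 0)"
      by (simp add: o_def)
    from has_derivative_of_real[OF this]
    have "((\<lambda>t. complex_of_real (\<eta> (z + of_real t * v))) has_vector_derivative of_real (D v)) (at 0)"
      unfolding has_vector_derivative_def sc by (simp add: scaleR_conv_of_real)
  } note V = this
  show "px (\<lambda>z. complex_of_real (\<eta> z)) z = of_real (D 1)"
    unfolding px_def using vector_derivative_at[OF V[of 1]] by simp
  show "py (\<lambda>z. complex_of_real (\<eta> z)) z = of_real (D \<i>)"
    unfolding py_def using vector_derivative_at[OF V[of \<i>]] by (simp add: mult.commute)
qed

lemma A_deriv:
  fixes z :: complex
  assumes "sin (z/2) \<noteq> 0"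
  shows "((\<lambda>z. inverse (sin (z/2))) has_field_derivative (-(1/2) * cos (z/2) / (sin (z/2))^2)) (at z)"
proof -
  have "((\<lambda>z. z/2) has_field_derivative 1/2) (at z)" by (auto intro!: derivative_eq_intros)
  from DERIV_chain2[OF DERIV_sin this] have "((\<lambda>z. sin (z/2)) has_field_derivative cos (z/2) * (1/2)) (at z)" .
  from DERIV_inverse_fun[OF this assms] show ?thesis by (simp add: field_simps power2_eq_square)
qed

lemma q_facts:
  fixes z :: complex
  assumes "Im z > 0"
  shows "norm (exp (\<i>*z/2)) < 1" "1 + exp (\<i>*z/2) \<noteq> 0" "1 - exp (\<i>*z/2) \<noteq> 0" "exp (\<i>*z/2) \<noteq> 0"
proof -
  show n: "norm (exp (\<i>*z/2)) < 1" using assms by simp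
  show "1 + exp (\<i>*z/2) \<noteq> 0"
  proof
    assume "1 + exp (\<i>*z/2) = 0"
    then have "exp (\<i>*z/2) = -1" by (simp add: add_eq_0_iff)
    with n show False by simp
  qed
  show "1 - exp (\<i>*z/2) \<noteq> 0"
  proof
    assume "1 - exp (\<i>*z/2) = 0"
    then have "exp (\<i>*z/2) = 1" by simp
    with n show False by simp
  qed
  show "exp (\<i>*z/2) \<noteq> 0" by simp
qed

lemma R_notin:
  fixes q :: complex
  assumes "norm q < 1"
  shows "(1 - q)/(1 + q) \<notin> \<real>\<^sub>\<le>\<^sub>0"
proof -
  have nq: "(Re q)^2 + (Im q)^2 < 1" using assms
    by (metis cmod_power2 norm_ge_zero power_less_one_iff zero_less_numeral)
  have "1 + q \<noteq> 0" using assms by (metis add_eq_0_iff norm_minus_cancel norm_one order_less_irrefl)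
  then have den: "(Re (1+q))^2 + (Im (1+q))^2 > 0"
    by (metis complex_eq_iff sum_power2_gt_zero_iff zero_complex.simps)
  have "Re ((1 - q)/(1 + q)) = (1 - ((Re q)^2 + (Im q)^2)) / ((Re (1+q))^2 + (Im (1+q))^2)"
    unfolding Re_divide by (simp add: algebra_simps power2_eq_square)
  also have "\<dots> > 0" using nq den by simp
  finally show ?thesis by (simp add: complex_nonpos_Reals_iff)
qed

lemma B_deriv:
  fixes z :: complex
  assumes z: "Im z > 0"
  shows "((\<lambda>z. 2 * Ln ((1 - exp (\<i>*z/2)) / (1 + exp (\<i>*z/2)))) has_field_derivative inverse (sin (z/2))) (at z)"
proof -
  define q where "q = exp (\<i>*z/2)"
  note Q = q_facts[OF z, folded q_def]
  have dq: "((\<lambda>z. exp (\<i>*z/2)) has_field_derivative (\<i>/2 * q)) (at z)"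
  proof -
    have "((\<lambda>z. \<i>*z/2) has_field_derivative \<i>/2) (at z)" by (auto intro!: derivative_eq_intros)
    from DERIV_chain2[OF DERIV_exp this] show ?thesis by (simp add: q_def mult.commute)
  qed
  have d1: "((\<lambda>z. 1 - exp (\<i>*z/2)) has_field_derivative -(\<i>/2 * q)) (at z)"
    using DERIV_diff[OF DERIV_const dq] by simp
  have d2: "((\<lambda>z. 1 + exp (\<i>*z/2)) has_field_derivative (\<i>/2 * q)) (at z)"
    using DERIV_add[OF DERIV_const dq] by simp
  have dr: "((\<lambda>z. (1 - exp (\<i>*z/2)) / (1 + exp (\<i>*z/2))) has_field_derivative
      ((-(\<i>/2 * q)) * (1 + q) - (1 - q) * (\<i>/2 * q)) / ((1 + q) * (1 + q))) (at z)"
    using DERIV_divide[OF d1 d2] Q by (simp add: q_def)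
  have dl: "(Ln has_field_derivative inverse ((1 - q)/(1 + q))) (at ((1 - exp (\<i>*z/2)) / (1 + exp (\<i>*z/2))))"
    using has_field_derivative_Ln[OF R_notin[OF Q(1)]] by (simp add: q_def)
  have "((\<lambda>z. 2 * Ln ((1 - exp (\<i>*z/2)) / (1 + exp (\<i>*z/2)))) has_field_derivative
       2 * (inverse ((1 - q)/(1 + q)) * (((-(\<i>/2 * q)) * (1 + q) - (1 - q) * (\<i>/2 * q)) / ((1 + q) * (1 + q))))) (at z)"
    by (rule DERIV_cmult[OF DERIV_chain2[OF dl dr]])
  moreover have "2 * (inverse ((1 - q)/(1 + q)) * (((-(\<i>/2 * q)) * (1 + q) - (1 - q) * (\<i>/2 * q)) / ((1 + q) * (1 + q))))
      = inverse (sin (z/2))"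
  proof -
    have s: "sin (z/2) = (q - inverse q) / (2*\<i>)"
      unfolding sin_exp_eq q_def by (simp add: exp_minus mult.commute)
    have n1: "1 + q - (q*q + q*(q*q)) \<noteq> 0"
    proof -
      have "1 + q - (q*q + q*(q*q)) = (1+q)*(1+q)*(1-q)" by (simp add: algebra_simps)
      then show ?thesis using Q by simp
    qed
    have n2: "q*q - 1 \<noteq> 0"
    proof -
      have "q*q - 1 = -((1+q)*(1-q))" by (simp add: algebra_simps)
      then show ?thesis using Q by simp
    qed
    have "2 * (inverse ((1 - q)/(1 + q)) * (((-(\<i>/2 * q)) * (1 + q) - (1 - q) * (\<i>/2 * q)) / ((1 + q) * (1 + q))))
       = - ((\<i> * (q * 2) + \<i> * (q * (q * 2))) / (1 + q - (q * q + q * (q * q))))"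
      using Q by (simp add: field_simps)
    also have "\<dots> = \<i> * (q * 2) / (q * q - 1)"
      using n1 n2 by (simp add: field_simps)
    also have "\<dots> = inverse (sin (z/2))"
      unfolding s using Q by (simp add: field_simps)
    finally show ?thesis .
  qed
  ultimately show ?thesis by simp
qed

lemma img:
  fixes z :: complex
  shows "inverse (sin (z/2)) - inverse (sin (cnj z/2)) = 2 * \<i> * of_real (Im (inverse (sin (z/2))))"
proof -
  have "inverse (sin (cnj z/2)) = cnj (inverse (sin (z/2)))" by (simp add: cnj_sin)
  then show ?thesis by (simp add: complex_eq_iff)
qed

lemma g_ne0:
  fixes w :: complex
  assumes "Re w = 0" "Im w > 0"
  shows "Im (inverse (sin (w/2))) \<noteq> 0"
proof -
  have e: "exp (-(Im w/2)) < exp (Im w/2)" using assms by simp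
  have "Im (sin (w/2)) > 0" using assms e by (simp add: Im_sin)
  then have i: "Im (sin (w/2)) \<noteq> 0" by simp
  have "Im (inverse (sin (w/2))) = - Im (sin (w/2)) / ((Re (sin (w/2)))^2 + (Im (sin (w/2)))^2)"
    by (simp add: inverse_eq_divide Im_divide)
  moreover have "(Re (sin (w/2)))^2 + (Im (sin (w/2)))^2 > 0" using i by (simp add: sum_power2_gt_zero_iff)
  ultimately show ?thesis using i by simp
qed

lemma factor:
  fixes F G :: "complex \<Rightarrow> real" and \<kappa> :: real
  assumes H: "\<And>z w. Im z > 0 \<Longrightarrow> Im w > 0 \<Longrightarrow> (\<forall>k::int. z - w \<noteq> of_real (2 * pi * of_int k)) \<Longrightarrow>
               \<kappa> * F z * F w = G z * G w"
      and g0: "G (2*\<i>) \<noteq> 0" and g1: "G (4*\<i>) \<noteq> 0" and g2: "G (6*\<i>) \<noteq> 0"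
  shows "\<exists>c. \<kappa> * c * c = 1 \<and> (\<forall>z. Im z > 0 \<longrightarrow> F z = c * G z)"
proof -
  have nr: "\<forall>k::int. a - b \<noteq> of_real (2 * pi * of_int k)" if "Im a \<noteq> Im b" for a b :: complex
  proof
    fix k :: int
    show "a - b \<noteq> of_real (2 * pi * of_int k)"
    proof
      assume "a - b = of_real (2 * pi * of_int k)"
      then have "Im (a - b) = 0" by simp
      with that show False by simp
    qed
  qed
  have h01: "\<kappa> * F (2*\<i>) * F (4*\<i>) = G (2*\<i>) * G (4*\<i>)" by (rule H) (simp, simp, rule nr, simp)
  then have f0: "F (2*\<i>) \<noteq> 0" using g0 g1 by auto
  have kn: "\<kappa> \<noteq> 0" using h01 g0 g1 by auto
  define c where "c = G (2*\<i>) / (\<kappa> * F (2*\<i>))"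
  have A: "F z = c * G z" if "Im z > 0" "\<forall>k::int. z - 2*\<i> \<noteq> of_real (2 * pi * of_int k)" for z
  proof -
    have "\<kappa> * F z * F (2*\<i>) = G z * G (2*\<i>)" by (rule H) (use that in auto)
    then show ?thesis using f0 kn unfolding c_def by (simp add: field_simps)
  qed
  have F1: "F (4*\<i>) = c * G (4*\<i>)" by (rule A) (simp, rule nr, simp)
  have F2: "F (6*\<i>) = c * G (6*\<i>)" by (rule A) (simp, rule nr, simp)
  have "\<kappa> * F (4*\<i>) * F (6*\<i>) = G (4*\<i>) * G (6*\<i>)" by (rule H) (simp, simp, rule nr, simp)
  then have kc: "\<kappa> * c * c = 1" using g1 g2 unfolding F1 F2 by (simp add: field_simps)
  have "F z = c * G z" if z: "Im z > 0" for z
  proof (cases "\<forall>k::int. z - 2*\<i> \<noteq> of_real (2 * pi * of_int k)")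
    case True then show ?thesis using A z by blast
  next
    case False
    then obtain k::int where k: "z - 2*\<i> = of_real (2 * pi * of_int k)" by blast
    then have "Im (z - 2*\<i>) = 0" by simp
    then have "Im z = 2" by simp
    then have "\<kappa> * F z * F (4*\<i>) = G z * G (4*\<i>)" using z by (intro H) (simp, simp, rule nr, simp)
    then have "\<kappa> * c * F z * G (4*\<i>) = G z * G (4*\<i>)" unfolding F1 by (simp add: ac_simps)
    then have "\<kappa> * c * F z = G z" using g1 by simp
    then have "(\<kappa> * c * c) * F z = c * G z" by (metis mult.assoc mult.commute)
    then show ?thesis using kc by simp
  qed
  then show ?thesis using kc by blast
qed

lemma dir_deriv:
  fixes f :: "complex \<Rightarrow> real"
  assumes d: "(f has_derivative L) (at (z + of_real t0 * v))"
  shows "((\<lambda>t. f (z + of_real t * v)) has_real_derivative L v) (at t0)"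
proof -
  have lin: "linear L" using d by (rule has_derivative_linear)
  have sc: "L (of_real t * v) = t * L v" for t
    using linear_cmul[OF lin, of t v] by (simp add: scaleR_conv_of_real)
  have "((\<lambda>t::real. z + of_real t * v) has_derivative (\<lambda>t. of_real t * v)) (at t0)"
    by (auto intro!: derivative_eq_intros)
  from diff_chain_at[OF this] d
  have "((\<lambda>t. f (z + of_real t * v)) has_derivative (\<lambda>t. L (of_real t * v))) (at t0)"
    by (simp add: o_def)
  moreover have "(\<lambda>t. L (of_real t * v)) = (*) (L v)" by (rule ext, subst sc, rule mult.commute)
  ultimately show ?thesis unfolding has_field_derivative_def by simp
qed

lemma per2:
  fixes z :: complex
  shows "sin ((z + of_real (2*pi))/2) = - sin (z/2)" "cos ((z + of_real (2*pi))/2) = - cos (z/2)"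
proof -
  have e: "(z + of_real (2*pi))/2 = z/2 + of_real pi" by (simp add: field_simps)
  show "sin ((z + of_real (2*pi))/2) = - sin (z/2)" unfolding e sin_add by (simp add: sin_of_real cos_of_real)
  show "cos ((z + of_real (2*pi))/2) = - cos (z/2)" unfolding e cos_add by (simp add: sin_of_real cos_of_real)
qed

lemma horiz_py:
  fixes \<eta> :: "complex \<Rightarrow> real" and D :: "complex \<Rightarrow> complex \<Rightarrow> real" and c :: real
  assumes d: "\<And>z. Im z > 0 \<Longrightarrow> (\<eta> has_derivative D z) (at z)"
      and fx: "\<And>z. Im z > 0 \<Longrightarrow> D z 1 = c * Im (inverse (sin (z/2)))"
      and z: "Im z > 0"
  shows "D z \<i> - D (z + of_real (2*pi)) \<i> = 2 * c * Re (inverse (sin (z/2)))"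
proof -
  define B where "B = (\<lambda>z. 2 * Ln ((1 - exp (\<i>*z/2)) / (1 + exp (\<i>*z/2))))"
  define \<psi> where "\<psi> = (\<lambda>z. \<eta> z - c * Im (B z))"
  have dpsi: "(\<psi> has_derivative (\<lambda>v. D x v - c * Im (inverse (sin (x/2)) * v))) (at x)" if x: "Im x > 0" for x
  proof -
    have "(B has_derivative (*) (inverse (sin (x/2)))) (at x)"
      using B_deriv[OF x] unfolding B_def has_field_derivative_def .
    from has_derivative_Im[OF this] have "((\<lambda>z. Im (B z)) has_derivative (\<lambda>v. Im (inverse (sin (x/2)) * v))) (at x)" .
    from has_derivative_diff[OF d[OF x] has_derivative_mult_right[OF this, of c]]
    show ?thesis unfolding \<psi>_def .
  qed
  have hor: "\<psi> (x + of_real a) = \<psi> x" if x: "Im x > 0" for x a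
  proof -
    have "\<forall>t. ((\<lambda>t. \<psi> (x + of_real t * 1)) has_real_derivative 0) (at t)"
    proof
      fix t :: real
      have xt: "Im (x + of_real t * 1) > 0" using x by simp
      from dir_deriv[OF dpsi[OF xt]]
      show "((\<lambda>t. \<psi> (x + of_real t * 1)) has_real_derivative 0) (at t)"
        using fx[OF xt] by simp
    qed
    from DERIV_isconst_all[OF this, of a 0] show ?thesis by simp
  qed
  define z' where "z' = z + of_real (2*pi)"
  have z': "Im z' > 0" using z by (simp add: z'_def)
  have p: "((\<lambda>t. \<psi> (z + of_real t * \<i>)) has_real_derivative (D z \<i> - c * Im (inverse (sin (z/2)) * \<i>))) (at 0)"
    using dir_deriv[OF dpsi[of "z + of_real 0 * \<i>"]] z by simp
  have q: "((\<lambda>t. \<psi> (z' + of_real t * \<i>)) has_real_derivative (D z' \<i> - c * Im (inverse (sin (z'/2)) * \<i>))) (at 0)"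
    using dir_deriv[OF dpsi[of "z' + of_real 0 * \<i>"]] z' by simp
  have q2: "((\<lambda>t. \<psi> (z' + of_real t * \<i>)) has_real_derivative (D z \<i> - c * Im (inverse (sin (z/2)) * \<i>))) (at 0)"
  proof (rule has_field_derivative_transform_within_open[OF p, of "{t. t > - Im z}"])
    show "open {t::real. t > - Im z}" by (simp add: open_Collect_less)
    show "(0::real) \<in> {t. t > - Im z}" using z by simp
    fix t :: real assume "t \<in> {t. t > - Im z}"
    then have "Im (z + of_real t * \<i>) > 0" by simp
    from hor[OF this, of "2*pi"] show "\<psi> (z + of_real t * \<i>) = \<psi> (z' + of_real t * \<i>)"
      by (simp add: z'_def algebra_simps)
  qed
  have EQ: "D z \<i> - c * Im (inverse (sin (z/2)) * \<i>) = D z' \<i> - c * Im (inverse (sin (z'/2)) * \<i>)"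
    using DERIV_unique[OF q2 q] .
  have ainv: "inverse (sin (z'/2)) = - inverse (sin (z/2))" unfolding z'_def per2 by simp
  have gen: "\<And>u::complex. Im (u * \<i>) = Re u" by simp
  have X1: "Im (inverse (sin (z/2)) * \<i>) = Re (inverse (sin (z/2)))" by (rule gen)
  have X2: "Im (inverse (sin (z'/2)) * \<i>) = - Re (inverse (sin (z/2)))" unfolding gen ainv by simp
  show ?thesis unfolding z'_def[symmetric] using EQ unfolding X1 X2 by (simp add: algebra_simps)
qed

lemma deriv_shift_eq:
  fixes f :: "complex \<Rightarrow> complex"
  assumes "\<And>x. f (x + a) = f x"
  shows "deriv f (z + a) = deriv f z"
proof -
  have "(\<lambda>x. f (x + a)) = f" using assms by (rule ext)
  then show ?thesis unfolding deriv_def DERIV_shift by simp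
qed

lemma delta_per:
  fixes \<nu> :: real
  shows "4 * cot ((x + of_real (2*pi)) / 2) - 2 * of_real \<nu> = 4 * cot (x / 2) - 2 * (of_real \<nu> :: complex)"
  unfolding cot_def per2 by simp

lemma Ad_per:
  fixes z :: complex
  shows "-(1/2) * cos ((z + of_real (2*pi))/2) / (sin ((z + of_real (2*pi))/2))^2 = -(-(1/2) * cos (z/2) / (sin (z/2))^2)"
  unfolding per2 by simp

lemma vd_imA:
  fixes z :: complex
  assumes "Im z > 0"
  shows "((\<lambda>t::real. complex_of_real (Im (inverse (sin ((z + of_real t)/2))))) has_vector_derivative
           complex_of_real (Im (-(1/2) * cos (z/2) / (sin (z/2))^2))) (at 0)"
proof -
  have s: "sin (z/2) \<noteq> 0" using assms sin_ne0_H[of "z/2"] by simp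
  have "((\<lambda>x. inverse (sin ((x + z)/2))) has_field_derivative (-(1/2) * cos (z/2) / (sin (z/2))^2)) (at (of_real 0))"
    using A_deriv[OF s] DERIV_shift[of "\<lambda>z. inverse (sin (z/2))" _ 0 z] by simp
  from has_vector_derivative_real_field[OF this]
  have "((\<lambda>t::real. inverse (sin ((of_real t + z)/2))) has_vector_derivative (-(1/2) * cos (z/2) / (sin (z/2))^2)) (at 0)" .
  then have "((\<lambda>t::real. inverse (sin ((z + of_real t)/2))) has_vector_derivative (-(1/2) * cos (z/2) / (sin (z/2))^2)) (at 0)"
    by (simp add: add.commute)
  moreover have "bounded_linear (\<lambda>u. complex_of_real (Im u))"
    using bounded_linear_compose[OF bounded_linear_of_real bounded_linear_Im] by (simp add: o_def)
  ultimately show ?thesis by (rule bounded_linear.has_vector_derivative[rotated])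
qed

lemma diffE:
  fixes d m n :: complex and c g Q R I s :: real
  shows "d * ((of_real (c*g) - \<i> * of_real Q)/2) + cnj d * ((of_real (c*g) + \<i> * of_real Q)/2) + m + n + of_real (2 * s * s * c * I)
  - (d * ((of_real (-(c*g)) - \<i> * of_real (Q - 2*c*R))/2) + cnj d * ((of_real (-(c*g)) + \<i> * of_real (Q - 2*c*R))/2) + m + n + of_real (2 * s * s * c * (-I)))
  = of_real c * (d * (of_real g - \<i> * of_real R) + cnj d * (of_real g + \<i> * of_real R) + of_real (4 * s * s * I))"
  by (simp add: algebra_simps) (simp add: field_simps)

definition KK :: "real \<Rightarrow> real \<Rightarrow> complex \<Rightarrow> complex" where
  "KK \<nu> s z = (4 * cot (z/2) - 2 * of_real \<nu>) * (of_real (Im (inverse (sin (z/2)))) - \<i> * of_real (Re (inverse (sin (z/2)))))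
     + cnj (4 * cot (z/2) - 2 * of_real \<nu>) * (of_real (Im (inverse (sin (z/2)))) + \<i> * of_real (Re (inverse (sin (z/2)))))
     + of_real (4 * s * s * Im (-(1/2) * cos (z/2) / (sin (z/2))^2))"

lemma eval1:
  fixes \<nu> s :: real
  assumes "KK \<nu> s (of_real pi + 2*\<i>) = 0"
  shows "s * s = 4"
proof -
  define ch where "ch = (exp 1 + exp (-1)) / (2::real)"
  define sh where "sh = (exp 1 - exp (-1)) / (2::real)"
  have chp: "ch > 0" unfolding ch_def by (simp add: add_pos_pos)
  have shp: "sh > 0" unfolding sh_def by simp
  have S: "sin ((of_real pi + 2*\<i>)/2) = of_real ch" by (simp add: complex_eq_iff Re_sin Im_sin ch_def)
  have C: "cos ((of_real pi + 2*\<i>)/2) = -\<i> * of_real sh" by (simp add: complex_eq_iff Re_cos Im_cos sh_def field_simps)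
  have i1: "Im (inverse (complex_of_real ch)) = 0" by simp
  have r1: "Re (inverse (complex_of_real ch)) = 1/ch" by (simp add: inverse_eq_divide)
  have m1: "Im (-(1/2) * (-\<i> * of_real sh) / (of_real ch)^2) = sh/(2 * ch^2)"
  proof -
    have "-(1/2) * (-\<i> * of_real sh) / (of_real ch)^2 = \<i> * of_real (sh/(2 * ch^2))" using chp by (simp add: field_simps)
    then show ?thesis by simp
  qed
  have "KK \<nu> s (of_real pi + 2*\<i>) = (4 * (-\<i> * of_real sh) / of_real ch - 2 * of_real \<nu>) * (of_real 0 - \<i> * of_real (1/ch))
     + cnj (4 * (-\<i> * of_real sh) / of_real ch - 2 * of_real \<nu>) * (of_real 0 + \<i> * of_real (1/ch))
     + of_real (4 * s * s * (sh/(2 * ch^2)))"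
    unfolding KK_def cot_def S C i1 r1 m1 by simp
  also have "\<dots> = of_real ((2 * s * s - 8) * sh / ch^2)"
    using chp by (simp add: field_simps complex_eq_iff power2_eq_square)
  finally have K: "KK \<nu> s (of_real pi + 2*\<i>) = of_real ((2 * s * s - 8) * sh / ch^2)" .
  have "(2 * s * s - 8) * sh / ch^2 = 0" using K assms by (metis of_real_eq_0_iff)
  then show ?thesis using chp shp by simp
qed

lemma eval2:
  fixes \<nu> s :: real
  assumes "KK \<nu> s (2*\<i>) = 0"
  shows "\<nu> = 0"
proof -
  define ch where "ch = (exp 1 + exp (-1)) / (2::real)"
  define sh where "sh = (exp 1 - exp (-1)) / (2::real)"
  have chp: "ch > 0" unfolding ch_def by (simp add: add_pos_pos)
  have shp: "sh > 0" unfolding sh_def by simp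
  have e: "(2*\<i>)/2 = \<i>" by simp
  have S: "sin \<i> = \<i> * of_real sh" by (simp add: complex_eq_iff Re_sin Im_sin sh_def)
  have C: "cos \<i> = of_real ch" by (simp add: complex_eq_iff Re_cos Im_cos ch_def)
  have i1: "Im (inverse (\<i> * complex_of_real sh)) = -1/sh"
  proof -
    have "inverse (\<i> * complex_of_real sh) = -\<i> * of_real (1/sh)" using shp by (simp add: field_simps)
    then show ?thesis by simp
  qed
  have r1: "Re (inverse (\<i> * complex_of_real sh)) = 0"
  proof -
    have "inverse (\<i> * complex_of_real sh) = -\<i> * of_real (1/sh)" using shp by (simp add: field_simps)
    then show ?thesis by simp
  qed
  have m1: "Im (-(1/2) * of_real ch / (\<i> * of_real sh)^2) = 0"
  proof -
    have "-(1/2) * of_real ch / (\<i> * of_real sh)^2 = of_real (ch/(2 * sh^2))" using shp by (simp add: field_simps power2_eq_square)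
    then show ?thesis by simp
  qed
  have "KK \<nu> s (2*\<i>) = (4 * of_real ch / (\<i> * of_real sh) - 2 * of_real \<nu>) * (of_real (-1/sh) - \<i> * of_real 0)
     + cnj (4 * of_real ch / (\<i> * of_real sh) - 2 * of_real \<nu>) * (of_real (-1/sh) + \<i> * of_real 0)
     + of_real (4 * s * s * 0)"
    unfolding KK_def cot_def e S C i1 r1 m1 by simp
  also have "\<dots> = of_real (4 * \<nu> / sh)"
    using shp by (simp add: field_simps complex_eq_iff power2_eq_square)
  finally have K: "KK \<nu> s (2*\<i>) = of_real (4 * \<nu> / sh)" .
  have "4 * \<nu> / sh = 0" using K assms by (metis of_real_eq_0_iff)
  then show ?thesis using shp by simp
qed



theorem proposition6p1:
  fixes \<kappa> \<nu> :: real and \<mu> \<mu>s :: complex and \<eta> :: "complex \<Rightarrow> real"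
  defines "\<delta> \<equiv> (\<lambda>z::complex. 4 * cot (z / 2) - 2 * of_real \<nu>)"
      and "\<sigma> \<equiv> (\<lambda>z::complex. - 2 * of_real (sqrt \<kappa>))"
      and "\<eta>c \<equiv> (\<lambda>z. complex_of_real (\<eta> z))"
  assumes "\<kappa> > 0"
      and "C2_on upper_half \<eta>"
      and "\<forall>z\<in>upper_half.
             lie_pps \<mu> \<mu>s \<delta> \<eta>c z + (1/2) * lie_scalar \<sigma> (lie_pps \<mu> \<mu>s \<sigma> \<eta>c) z = 0"
      and "\<forall>z\<in>upper_half. \<forall>w\<in>upper_half. (\<forall>k::int. z - w \<noteq> of_real (2 * pi * of_int k)) \<longrightarrow>
             lie_two \<delta> Gamma_tw z w + lie_pps \<mu> \<mu>s \<sigma> \<eta>c z * lie_pps \<mu> \<mu>s \<sigma> \<eta>c w = 0"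
      and "\<forall>z\<in>upper_half. \<forall>w\<in>upper_half. (\<forall>k::int. z - w \<noteq> of_real (2 * pi * of_int k)) \<longrightarrow>
             lie_two \<sigma> Gamma_tw z w = 0"
  shows "\<kappa> = 4 \<and> \<nu> = 0"
proof -
  define s where "s = sqrt \<kappa>"
  have s0: "s > 0" using assms(4) by (simp add: s_def)
  have ss: "s * s = \<kappa>" using assms(4) by (simp add: s_def)
  obtain f' f'' where fd: "\<forall>z\<in>upper_half. (\<eta> has_derivative blinfun_apply (f' z)) (at z)"
    using assms(5) unfolding C2_on_def by blast
  define D where "D = (\<lambda>z. blinfun_apply (f' z))"
  have dH: "\<And>z. Im z > 0 \<Longrightarrow> (\<eta> has_derivative D z) (at z)"
    using fd unfolding D_def upper_half_def by auto
  have PX: "\<And>z. Im z > 0 \<Longrightarrow> px \<eta>c z = of_real (D z 1)"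
    unfolding \<eta>c_def using pxpy_real(1)[OF dH] by auto
  have PY: "\<And>z. Im z > 0 \<Longrightarrow> py \<eta>c z = of_real (D z \<i>)"
    unfolding \<eta>c_def using pxpy_real(2)[OF dH] by auto
  have Lam: "lie_pps \<mu> \<mu>s \<sigma> \<eta>c = (\<lambda>z. -2 * of_real s * px \<eta>c z)"
  proof (rule ext)
    fix z
    show "lie_pps \<mu> \<mu>s \<sigma> \<eta>c z = -2 * of_real s * px \<eta>c z"
      unfolding lie_pps_def lie_scalar_def wz_def wzb_def \<sigma>_def s_def
      by (simp add: field_simps)
  qed
  have LamH: "\<And>z. Im z > 0 \<Longrightarrow> lie_pps \<mu> \<mu>s \<sigma> \<eta>c z = of_real (-2 * s * D z 1)"
    unfolding Lam using PX by simp
  have eq2: "\<kappa> * D z 1 * D w 1 = Im (inverse (sin (z/2))) * Im (inverse (sin (w/2)))"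
    if z: "Im z > 0" and w: "Im w > 0" and k: "\<forall>k::int. z - w \<noteq> of_real (2 * pi * of_int k)" for z w
  proof -
    define G1 where "G1 = Im (inverse (sin (z/2)))"
    define G2 where "G2 = Im (inverse (sin (w/2)))"
    have M: "lie_two \<delta> Gamma_tw z w + lie_pps \<mu> \<mu>s \<sigma> \<eta>c z * lie_pps \<mu> \<mu>s \<sigma> \<eta>c w = 0"
      using assms(7) z w k by (auto simp: upper_half_def)
    have L: "lie_two \<delta> Gamma_tw z w = of_real (-4 * G1 * G2)"
    proof -
      have h: "\<And>a b::real. (2*\<i> * of_real a)*(2*\<i> * of_real b) = (of_real (-4*a*b) :: complex)"
        by (simp add: algebra_simps)
      show ?thesis unfolding \<delta>_def lie_two_Gam[OF z w k] img G1_def G2_def by (rule h)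
    qed
    have "(of_real (-4 * G1 * G2 + (-2 * s * D z 1) * (-2 * s * D w 1)) :: complex) = 0"
      using M unfolding L LamH[OF z] LamH[OF w] of_real_add of_real_mult .
    then have "-4 * G1 * G2 + (-2 * s * D z 1) * (-2 * s * D w 1) = 0"
      by (metis of_real_eq_0_iff)
    then have "(s * s) * D z 1 * D w 1 = G1 * G2" by (simp add: algebra_simps)
    then show ?thesis unfolding ss G1_def G2_def .
  qed
  have g2: "Im (inverse (sin (2*\<i>/2))) \<noteq> 0" using g_ne0[of "2*\<i>"] by simp
  have g4: "Im (inverse (sin (4*\<i>/2))) \<noteq> 0" using g_ne0[of "4*\<i>"] by simp
  have g6: "Im (inverse (sin (6*\<i>/2))) \<noteq> 0" using g_ne0[of "6*\<i>"] by simp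
  obtain c where kc: "\<kappa> * c * c = 1" and fc: "\<forall>z. Im z > 0 \<longrightarrow> D z 1 = c * Im (inverse (sin (z/2)))"
    using factor[of \<kappa> "\<lambda>z. D z 1" "\<lambda>z. Im (inverse (sin (z/2)))", OF eq2 g2 g4 g6] by auto
  have c0: "c \<noteq> 0" using kc by auto
  have HP: "D z \<i> - D (z + of_real (2*pi)) \<i> = 2 * c * Re (inverse (sin (z/2)))" if "Im z > 0" for z
    using horiz_py[of \<eta> D c z] dH fc that by auto
  have PL: "px (lie_pps \<mu> \<mu>s \<sigma> \<eta>c) z = of_real (-2 * s * c * Im (-(1/2) * cos (z/2) / (sin (z/2))^2))"
    if z: "Im z > 0" for z
  proof -
    have "(\<lambda>t. lie_pps \<mu> \<mu>s \<sigma> \<eta>c (z + of_real t)) = (\<lambda>t::real. of_real (-2 * s * c) * of_real (Im (inverse (sin ((z + of_real t)/2)))))"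
    proof (rule ext)
      fix t :: real
      have zt: "Im (z + of_real t) > 0" using z by simp
      show "lie_pps \<mu> \<mu>s \<sigma> \<eta>c (z + of_real t) = of_real (-2 * s * c) * of_real (Im (inverse (sin ((z + of_real t)/2))))"
        unfolding LamH[OF zt] using fc zt by simp
    qed
    then show ?thesis unfolding px_def
      using vector_derivative_at[OF has_vector_derivative_mult_right[OF vd_imA[OF z], of "of_real (-2 * s * c)"]]
      by simp
  qed
  have E: "\<delta> x * ((of_real (D x 1) - \<i> * of_real (D x \<i>))/2) + cnj (\<delta> x) * ((of_real (D x 1) + \<i> * of_real (D x \<i>))/2)
      + \<mu> * deriv \<delta> x + \<mu>s * cnj (deriv \<delta> x) + of_real (2 * s * s * c * Im (-(1/2) * cos (x/2) / (sin (x/2))^2)) = 0"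
    if x: "Im x > 0" for x
  proof -
    have A: "lie_pps \<mu> \<mu>s \<delta> \<eta>c x + (1/2) * lie_scalar \<sigma> (lie_pps \<mu> \<mu>s \<sigma> \<eta>c) x = 0"
      using assms(6) x by (auto simp: upper_half_def)
    have F1: "lie_pps \<mu> \<mu>s \<delta> \<eta>c x = \<delta> x * ((of_real (D x 1) - \<i> * of_real (D x \<i>))/2) + cnj (\<delta> x) * ((of_real (D x 1) + \<i> * of_real (D x \<i>))/2)
      + \<mu> * deriv \<delta> x + \<mu>s * cnj (deriv \<delta> x)"
      unfolding lie_pps_def lie_scalar_def wz_def wzb_def PX[OF x] PY[OF x] by (rule refl)
    have LSg: "lie_scalar \<sigma> F x = -2 * of_real s * px F x" for F
      unfolding lie_scalar_def wz_def wzb_def \<sigma>_def s_def by (simp add: field_simps)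
    have F2: "(1/2) * lie_scalar \<sigma> (lie_pps \<mu> \<mu>s \<sigma> \<eta>c) x = of_real (2 * s * s * c * Im (-(1/2) * cos (x/2) / (sin (x/2))^2))"
      unfolding LSg PL[OF x] by simp
    show ?thesis using A unfolding F1 F2 .
  qed
  have KZ: "KK \<nu> s z = 0" if z: "Im z > 0" for z
  proof -
    define z' where "z' = z + of_real (2*pi)"
    have z': "Im z' > 0" using z by (simp add: z'_def)
    have dper: "\<delta> (x + of_real (2*pi)) = \<delta> x" for x unfolding \<delta>_def by (rule delta_per)
    have d1: "\<delta> z' = \<delta> z" unfolding z'_def by (rule dper)
    have d2: "deriv \<delta> z' = deriv \<delta> z" unfolding z'_def by (rule deriv_shift_eq[of \<delta> "of_real (2*pi)", OF dper])
    have p1: "D z 1 = c * Im (inverse (sin (z/2)))" using fc z by auto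
    have ainv: "inverse (sin (z'/2)) = - inverse (sin (z/2))" unfolding z'_def per2 by simp
    have "D z' 1 = c * Im (inverse (sin (z'/2)))" using fc z' by blast
    then have p2: "D z' 1 = -(c * Im (inverse (sin (z/2))))" unfolding ainv by simp
    have q2: "D z' \<i> = D z \<i> - 2 * c * Re (inverse (sin (z/2)))" using HP[OF z] unfolding z'_def by simp
    have a2: "Im (-(1/2) * cos (z'/2) / (sin (z'/2))^2) = - Im (-(1/2) * cos (z/2) / (sin (z/2))^2)"
      unfolding z'_def Ad_per by simp
    have "(\<delta> z * ((of_real (D z 1) - \<i> * of_real (D z \<i>))/2) + cnj (\<delta> z) * ((of_real (D z 1) + \<i> * of_real (D z \<i>))/2)
      + \<mu> * deriv \<delta> z + \<mu>s * cnj (deriv \<delta> z) + of_real (2 * s * s * c * Im (-(1/2) * cos (z/2) / (sin (z/2))^2)))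
      - (\<delta> z' * ((of_real (D z' 1) - \<i> * of_real (D z' \<i>))/2) + cnj (\<delta> z') * ((of_real (D z' 1) + \<i> * of_real (D z' \<i>))/2)
      + \<mu> * deriv \<delta> z' + \<mu>s * cnj (deriv \<delta> z') + of_real (2 * s * s * c * Im (-(1/2) * cos (z'/2) / (sin (z'/2))^2))) = 0"
      using E[OF z] E[OF z'] by simp
    then have X: "of_real c * (\<delta> z * (of_real (Im (inverse (sin (z/2)))) - \<i> * of_real (Re (inverse (sin (z/2)))))
     + cnj (\<delta> z) * (of_real (Im (inverse (sin (z/2)))) + \<i> * of_real (Re (inverse (sin (z/2)))))
     + of_real (4 * s * s * Im (-(1/2) * cos (z/2) / (sin (z/2))^2))) = 0"
      unfolding d1 d2 p1 p2 q2 a2 diffE .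
    have "KK \<nu> s z = \<delta> z * (of_real (Im (inverse (sin (z/2)))) - \<i> * of_real (Re (inverse (sin (z/2)))))
     + cnj (\<delta> z) * (of_real (Im (inverse (sin (z/2)))) + \<i> * of_real (Re (inverse (sin (z/2)))))
     + of_real (4 * s * s * Im (-(1/2) * cos (z/2) / (sin (z/2))^2))"
      unfolding KK_def \<delta>_def by (rule refl)
    then have "of_real c * KK \<nu> s z = 0" using X by simp
    then show ?thesis using c0 by simp
  qed
  have "s * s = 4" by (rule eval1[OF KZ]) simp
  moreover have "\<nu> = 0" by (rule eval2[OF KZ]) simp
  ultimately show ?thesis using ss by simp
qed


end
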